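(* Let $G=(V,E)$ with weights $w^\pm$ be as in the context, and let $P_0,N_0\subseteq V$ be disjoint. The joint distribution of the pair (final +active set, final -active set) produced by the CLT process with seeds $(P_0,N_0)$ is identical to the joint distribution of the pair (set of +active nodes, set of -active nodes) defined by distances in the random live-path graph $G_X$.
   Context: Weights: $G=(V,E)$ finite directed graph, each edge $(u,v)$ has weights $w^+_{uv},w^-_{uv}\ge 0$, with $w^\pm_{uv}=0$ for non-edges and $\sum_u w^+_{uv}\le1$, $\sum_u w^-_{uv}\le 1$ for all $v$. Seeds $P_0,N_0$ are disjoint. CLT process (two independent LT diffusions with negative dominance). Each node $v$ draws $\theta^+_v,\theta^-_v$ independently and uniformly from $[0,1]$. The positive diffusion is the LT process $R^+_0=P_0$, $R^+_t=R^+_{t-1}\cup\{v:\sum_{u\in R^+_{t-1}}w^+_{uv}\ge\theta^+_v\}$, and $\tau^+(v)=\min\{t: v\in R^+_t\}$ ($=\infty$ if no such $t$). The negative diffusion is defined identically from $N_0$, $w^-$, $\theta^-$, giving $\tau^-(v)$. A node $v$ is finally -active iff $\tau^-(v)<\infty$ and $\tau^-(v)\le\tau^+(v)$, and finally +active iff $\tau^+(v)<\infty$ and $\tau^+(v)<\tau^-(v)$. Random live-path graph $G_X$: independently for each $v\in V$, select at most one positive in-edge, choosing $(u,v)$ with probability $w^+_{uv}$ and no positive in-edge with probability $1-\sum_u w^+_{uv}$; independently, select at most one negative in-edge in the same way using $w^-$. Let $G^+$ (resp. $G^-$) be the graph on $V$ with the selected positive (resp. negative) edges. For $A\subseteq V$,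 $d_{G^+}(A,v)$ is the length of a shortest directed path in $G^+$ from a node of $A$ to $v$ ($0$ if $v\in A$, $\infty$ if none); $d_{G^-}(A,v)$ similarly. In $G_X$, $v$ is +active iff $d_{G^+}(P_0,v)<\infty$ and $d_{G^+}(P_0,v)<d_{G^-}(N_0,v)$, and -active iff $d_{G^-}(N_0,v)<\infty$ and $d_{G^-}(N_0,v)\le d_{G^+}(P_0,v)$. *)

theory Defs
  imports "HOL-Probability.Probability"
begin

text \<open>Vertices are the elements of a finite type 'v (V = UNIV). A weight function
  w :: 'v => 'v => real gives w u v = weight of the edge (u,v).\<close>

fun lt_set :: "('v::finite \<Rightarrow> 'v \<Rightarrow> real) \<Rightarrow> ('v \<Rightarrow> real) \<Rightarrow> 'v set \<Rightarrow> nat \<Rightarrow> 'v set" where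
  "lt_set w \<theta> S 0 = S"
| "lt_set w \<theta> S (Suc t) = lt_set w \<theta> S t \<union> {v. (\<Sum>u\<in>lt_set w \<theta> S t. w u v) \<ge> \<theta> v}"

definition act_time :: "('v::finite \<Rightarrow> 'v \<Rightarrow> real) \<Rightarrow> ('v \<Rightarrow> real) \<Rightarrow> 'v set \<Rightarrow> 'v \<Rightarrow> enat" where
  "act_time w \<theta> S v = (INF t\<in>{t. v \<in> lt_set w \<theta> S t}. enat t)"

definition clt_outcome ::
  "('v::finite \<Rightarrow> 'v \<Rightarrow> real) \<Rightarrow> ('v \<Rightarrow> 'v \<Rightarrow> real) \<Rightarrow> 'v set \<Rightarrow> 'v set
   \<Rightarrow> ('v \<Rightarrow> real) \<Rightarrow> ('v \<Rightarrow> real) \<Rightarrow> 'v set \<times> 'v set" where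
  "clt_outcome wp wn P0 N0 \<theta>p \<theta>n =
     ({v. act_time wp \<theta>p P0 v < \<infinity> \<and> act_time wp \<theta>p P0 v < act_time wn \<theta>n N0 v},
      {v. act_time wn \<theta>n N0 v < \<infinity> \<and> act_time wn \<theta>n N0 v \<le> act_time wp \<theta>p P0 v})"

definition threshold_space :: "('v::finite \<Rightarrow> real) measure" where
  "threshold_space = PiM UNIV (\<lambda>_. uniform_measure lborel {0..1::real})"

text \<open>A selection x :: 'v => 'v option picks for each node v at most one in-edge
  (x v = Some u means edge (u,v) is selected).\<close>
definition sel_pmf :: "('v::finite \<Rightarrow> 'v \<Rightarrow> real) \<Rightarrow> 'v \<Rightarrow> 'v option pmf" where
  "sel_pmf w v = embed_pmf (\<lambda>c. case c of None \<Rightarrow> 1 - (\<Sum>u\<in>UNIV. w u v) | Some u \<Rightarrow> w u v)"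

definition live_pmf :: "('v::finite \<Rightarrow> 'v \<Rightarrow> real) \<Rightarrow> ('v \<Rightarrow> 'v option) pmf" where
  "live_pmf w = Pi_pmf UNIV None (sel_pmf w)"

definition live_edges :: "('v \<Rightarrow> 'v option) \<Rightarrow> ('v \<times> 'v) set" where
  "live_edges x = {(u, v). x v = Some u}"

definition live_dist :: "('v \<Rightarrow> 'v option) \<Rightarrow> 'v set \<Rightarrow> 'v \<Rightarrow> enat" where
  "live_dist x A v = (INF k\<in>{k. \<exists>u\<in>A. (u, v) \<in> live_edges x ^^ k}. enat k)"

definition live_outcome ::
  "'v set \<Rightarrow> 'v set \<Rightarrow> ('v \<Rightarrow> 'v option) \<Rightarrow> ('v \<Rightarrow> 'v option) \<Rightarrow> 'v set \<times> 'v set" where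
  "live_outcome P0 N0 xp xn =
     ({v. live_dist xp P0 v < \<infinity> \<and> live_dist xp P0 v < live_dist xn N0 v},
      {v. live_dist xn N0 v < \<infinity> \<and> live_dist xn N0 v \<le> live_dist xp P0 v})"

end

theory Submission
  imports Defs
begin

lemma enat_eq_by_le:
  fixes a b :: enat
  assumes "\<And>t. a \<le> enat t \<longleftrightarrow> b \<le> enat t"
  shows "a = b"
proof (cases a)
  case (enat n)
  then have "b \<le> enat n" using assms by auto
  then obtain m where m: "b = enat m" by (cases b) auto
  with assms[of m] enat have "n \<le> m" by auto
  moreover from assms[of n] enat m have "m \<le> n" by auto
  ultimately show ?thesis using enat m by simp
next
  case infinity
  show ?thesis
  proof (cases b)
    case (enat m) with assms[of m] infinity show ?thesis by auto
  qed (use infinity in auto)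
qed

lemma lt_set_mono: "t \<le> t' \<Longrightarrow> lt_set w \<theta> S t \<subseteq> lt_set w \<theta> S t'"
  by (induction t' rule: dec_induct) auto

lemma lt_set_iff: "v \<in> lt_set w \<theta> S t \<longleftrightarrow> act_time w \<theta> S v \<le> enat t"
proof
  assume "v \<in> lt_set w \<theta> S t"
  then show "act_time w \<theta> S v \<le> enat t" unfolding act_time_def by (auto intro: INF_lower)
next
  assume a: "act_time w \<theta> S v \<le> enat t"
  let ?K = "{t. v \<in> lt_set w \<theta> S t}"
  have "?K \<noteq> {}"
  proof
    assume "?K = {}" then have "act_time w \<theta> S v = \<infinity>" unfolding act_time_def by (simp add: top_enat_def)
    with a show False by simp
  qed
  then obtain t0 where t0: "t0 \<in> ?K" by blast
  let ?l = "LEAST t. t \<in> ?K"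
  have l: "?l \<in> ?K" using t0 by (rule LeastI)
  have "act_time w \<theta> S v = enat ?l"
    unfolding act_time_def
  proof (rule antisym)
    show "(INF t\<in>?K. enat t) \<le> enat ?l" using l by (rule INF_lower)
    show "enat ?l \<le> (INF t\<in>?K. enat t)" by (rule INF_greatest) (auto intro: Least_le)
  qed
  with a have "?l \<le> t" by simp
  with l lt_set_mono show "v \<in> lt_set w \<theta> S t" by blast
qed


definition ssum :: "('v::finite \<Rightarrow> 'v \<Rightarrow> real) \<Rightarrow> ('v \<Rightarrow> enat) \<Rightarrow> 'v \<Rightarrow> nat \<Rightarrow> real" where
  "ssum w f v t = (\<Sum>u\<in>{u. f u \<le> enat t}. w u v)"

definition Cset :: "('v::finite \<Rightarrow> 'v \<Rightarrow> real) \<Rightarrow> 'v set \<Rightarrow> ('v \<Rightarrow> enat) \<Rightarrow> 'v \<Rightarrow> real set" where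
  "Cset w S f v = (if v \<in> S then (if f v = 0 then UNIV else {})
     else if f v = 0 then {}
     else if f v = \<infinity> then {(\<Sum>u\<in>{u. f u < \<infinity>}. w u v)<..}
     else if f v = enat 1 then {..ssum w f v 0}
     else {ssum w f v (the_enat (f v) - 2)<..ssum w f v (the_enat (f v) - 1)})"

lemma ssum_mono:
  assumes nn: "\<And>u v. w u v \<ge> 0" and "s \<le> t"
  shows "ssum w f v s \<le> ssum w f v t"
  unfolding ssum_def
  by (rule sum_mono2) (use assms in \<open>auto intro: order_trans\<close>)

lemma ssum_le_fin:
  assumes nn: "\<And>u v. w u v \<ge> 0"
  shows "ssum w f v t \<le> (\<Sum>u\<in>{u. f u < \<infinity>}. w u v)"
  unfolding ssum_def
  by (rule sum_mono2) (use assms in \<open>auto dest: enat_ile\<close>)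

lemma fin_bound:
  fixes f :: "'v::finite \<Rightarrow> enat"
  shows "\<exists>N. {u. f u < \<infinity>} = {u. f u \<le> enat N}"
proof -
  have "finite (the_enat ` f ` UNIV)" by simp
  then obtain N where N: "\<forall>x \<in> the_enat ` f ` UNIV. x \<le> N"
    using finite_nat_set_iff_bounded_le by blast
  have "{u. f u < \<infinity>} = {u. f u \<le> enat N}"
  proof (intro set_eqI iffI)
    fix u assume "u \<in> {u. f u < \<infinity>}"
    then obtain n where "f u = enat n" by (cases "f u") auto
    moreover have "the_enat (f u) \<le> N" using N by auto
    ultimately show "u \<in> {u. f u \<le> enat N}" by simp
  next
    fix u assume "u \<in> {u. f u \<le> enat N}" then show "u \<in> {u. f u < \<infinity>}"
      by (auto dest: enat_ile)
  qed
  then show ?thesis by blast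
qed

lemma lt_set_Suc_eq:
  assumes "lt_set w \<theta> S t = X"
  shows "lt_set w \<theta> S (Suc t) = X \<union> {v. (\<Sum>u\<in>X. w u v) \<ge> \<theta> v}"
  using assms by simp


lemma lt_char:
  fixes w :: "'v::finite \<Rightarrow> 'v \<Rightarrow> real"
  assumes nn: "\<And>u v. w u v \<ge> 0"
  shows "(\<lambda>v. act_time w \<theta> S v) = f \<longleftrightarrow> (\<forall>v. \<theta> v \<in> Cset w S f v)"
proof
  assume A: "(\<lambda>v. act_time w \<theta> S v) = f"
  have L: "lt_set w \<theta> S t = {u. f u \<le> enat t}" for t
    using lt_set_iff[of _ w \<theta> S t] A by auto
  have LS: "lt_set w \<theta> S (Suc t) = {u. f u \<le> enat t} \<union> {v. ssum w f v t \<ge> \<theta> v}" for t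
    using lt_set_Suc_eq[OF L[of t]] by (simp add: ssum_def)
  show "\<forall>v. \<theta> v \<in> Cset w S f v"
  proof
    fix v
    show "\<theta> v \<in> Cset w S f v"
    proof (cases "v \<in> S")
      case True
      then have "v \<in> lt_set w \<theta> S 0" by simp
      then have "f v = 0" using L[of 0] by (simp add: zero_enat_def[symmetric])
      then show ?thesis using True by (simp add: Cset_def)
    next
      case nS: False
      have f0: "f v \<noteq> 0"
      proof
        assume "f v = 0" then have "v \<in> lt_set w \<theta> S 0" using L[of 0] by (simp add: zero_enat_def)
        with nS show False by simp
      qed
      show ?thesis
      proof (cases "f v")
        case infinity
        obtain N where N: "{u. f u < \<infinity>} = {u. f u \<le> enat N}" using fin_bound by blast
        have "v \<notin> lt_set w \<theta> S (Suc N)" using L[of "Suc N"] infinity by simp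
        then have "\<not> ssum w f v N \<ge> \<theta> v" using LS[of N] by blast
        then show ?thesis using nS f0 infinity N by (simp add: Cset_def ssum_def)
      next
        case (enat n)
        with f0 have n1: "n \<ge> 1" by (cases n) (auto simp: zero_enat_def)
        have vin: "v \<in> lt_set w \<theta> S (Suc (n-1))" using L[of "Suc (n-1)"] enat n1 by simp
        have vnot: "v \<notin> lt_set w \<theta> S (n-1)" using L[of "n-1"] enat n1 by simp
        have le: "\<theta> v \<le> ssum w f v (n-1)" using vin vnot LS[of "n-1"] L[of "n-1"] by blast
        show ?thesis
        proof (cases "n = 1")
          case True
          then show ?thesis using nS f0 enat le by (simp add: Cset_def one_enat_def)
        next
          case False
          then have n2: "n - 1 = Suc (n - 2)" using n1 by simp
          have "\<not> ssum w f v (n-2) \<ge> \<theta> v" using vnot LS[of "n-2"] n2 by auto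
          then show ?thesis using nS f0 enat le False by (simp add: Cset_def one_enat_def)
        qed
      qed
    qed
  qed
next
  assume H: "\<forall>v. \<theta> v \<in> Cset w S f v"
  have L: "lt_set w \<theta> S t = {u. f u \<le> enat t}" for t
  proof (induction t)
    case 0
    show ?case
    proof (intro set_eqI iffI)
      fix u assume "u \<in> lt_set w \<theta> S 0"
      then show "u \<in> {u. f u \<le> enat 0}" using H[rule_format, of u]
        by (auto simp: Cset_def split: if_splits)
    next
      fix u assume "u \<in> {u. f u \<le> enat 0}"
      then show "u \<in> lt_set w \<theta> S 0" using H[rule_format, of u]
        by (auto simp: Cset_def zero_enat_def split: if_splits)
    qed
  next
    case (Suc t)
    have LS: "lt_set w \<theta> S (Suc t) = {u. f u \<le> enat t} \<union> {v. ssum w f v t \<ge> \<theta> v}"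
      using lt_set_Suc_eq[OF Suc] by (simp add: ssum_def)
    show ?case unfolding LS
    proof (intro set_eqI)
      fix v
      have Hv: "\<theta> v \<in> Cset w S f v" using H by blast
      show "v \<in> {u. f u \<le> enat t} \<union> {v. ssum w f v t \<ge> \<theta> v} \<longleftrightarrow> v \<in> {u. f u \<le> enat (Suc t)}"
      proof (cases "v \<in> S")
        case True
        then show ?thesis using Hv by (auto simp: Cset_def split: if_splits)
      next
        case nS: False
        show ?thesis
        proof (cases "f v")
          case infinity
          then have "ssum w f v t < \<theta> v" using Hv nS ssum_le_fin[of w f v t, OF nn]
            by (auto simp: Cset_def)
          then show ?thesis using infinity by auto
        next
          case (enat n)
          have f0: "n \<noteq> 0" using Hv nS enat by (auto simp: Cset_def zero_enat_def split: if_splits)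
          show ?thesis
          proof (cases "n = 1")
            case True
            then have "\<theta> v \<le> ssum w f v 0" using Hv nS enat by (auto simp: Cset_def one_enat_def zero_enat_def)
            then have "\<theta> v \<le> ssum w f v t" using ssum_mono[of w 0 t f v, OF nn] by simp
            then show ?thesis using True enat by auto
          next
            case False
            then have Iv: "ssum w f v (n-2) < \<theta> v" "\<theta> v \<le> ssum w f v (n-1)"
              using Hv nS enat f0 by (auto simp: Cset_def one_enat_def zero_enat_def)
            consider "n \<le> t" | "n = Suc t" | "n > Suc t" by linarith
            then show ?thesis
            proof cases
              case 1 then show ?thesis using enat by auto
            next
              case 2 then show ?thesis using enat Iv by auto
            next
              case 3
              then have "ssum w f v t \<le> ssum w f v (n-2)" by (intro ssum_mono[OF nn]) simp
              then show ?thesis using 3 enat Iv by auto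
            qed
          qed
        qed
      qed
    qed
  qed
  show "(\<lambda>v. act_time w \<theta> S v) = f"
  proof
    fix v
    show "act_time w \<theta> S v = f v"
      by (rule enat_eq_by_le) (use lt_set_iff[of v w \<theta> S] L in auto)
  qed
qed


lemma INF_enat_Least:
  fixes K :: "nat set"
  assumes "K \<noteq> {}"
  shows "(INF k\<in>K. enat k) = enat (LEAST k. k \<in> K)"
proof -
  from assms obtain t0 where t0: "t0 \<in> K" by blast
  have l: "(LEAST k. k \<in> K) \<in> K" using t0 by (rule LeastI)
  show ?thesis
  proof (rule antisym)
    show "(INF t\<in>K. enat t) \<le> enat (LEAST k. k \<in> K)" using l by (rule INF_lower)
    show "enat (LEAST k. k \<in> K) \<le> (INF t\<in>K. enat t)" by (rule INF_greatest) (auto intro: Least_le)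
  qed
qed

lemma INF_enat_empty: "(INF k\<in>({}::nat set). enat k) = \<infinity>"
  by (simp add: top_enat_def)

lemma INF_enat_Suc:
  fixes K :: "nat set"
  shows "(INF k\<in>Suc ` K. enat k) = eSuc (INF k\<in>K. enat k)"
proof (cases "K = {}")
  case True then show ?thesis by (simp add: top_enat_def)
next
  case False
  then have "Suc ` K \<noteq> {}" by simp
  have l: "(LEAST k. k \<in> K) \<in> K" using False by (auto intro: LeastI)
  have "(LEAST k. k \<in> Suc ` K) = Suc (LEAST k. k \<in> K)"
    by (rule Least_equality) (use l in \<open>auto intro: Least_le\<close>)
  then show ?thesis using INF_enat_Least[OF False] INF_enat_Least[OF \<open>Suc ` K \<noteq> {}\<close>]
    by (simp add: eSuc_enat)
qed

lemma live_paths_Suc: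
  assumes "v \<notin> A"
  shows "{k. \<exists>u\<in>A. (u, v) \<in> live_edges x ^^ k} =
    (case x v of None \<Rightarrow> {} | Some y \<Rightarrow> Suc ` {k. \<exists>u\<in>A. (u, y) \<in> live_edges x ^^ k})"
proof (intro set_eqI iffI)
  fix k assume "k \<in> {k. \<exists>u\<in>A. (u, v) \<in> live_edges x ^^ k}"
  then obtain u where u: "u \<in> A" "(u, v) \<in> live_edges x ^^ k" by blast
  show "k \<in> (case x v of None \<Rightarrow> {} | Some y \<Rightarrow> Suc ` {k. \<exists>u\<in>A. (u, y) \<in> live_edges x ^^ k})"
  proof (cases k)
    case 0 then show ?thesis using u assms by auto
  next
    case (Suc m)
    then obtain y where "(u, y) \<in> live_edges x ^^ m" "(y, v) \<in> live_edges x"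
      using u by auto
    then show ?thesis using u Suc by (auto simp: live_edges_def)
  qed
next
  fix k assume "k \<in> (case x v of None \<Rightarrow> {} | Some y \<Rightarrow> Suc ` {k. \<exists>u\<in>A. (u, y) \<in> live_edges x ^^ k})"
  then obtain y m u where "x v = Some y" "k = Suc m" "u \<in> A" "(u, y) \<in> live_edges x ^^ m"
    by (auto split: option.splits)
  then show "k \<in> {k. \<exists>u\<in>A. (u, v) \<in> live_edges x ^^ k}"
    by (auto simp: live_edges_def)
qed

lemma live_dist_in: "v \<in> A \<Longrightarrow> live_dist x A v = 0"
proof -
  assume "v \<in> A"
  then have "(0::nat) \<in> {k. \<exists>u\<in>A. (u, v) \<in> live_edges x ^^ k}" by auto
  then have "live_dist x A v \<le> enat 0" unfolding live_dist_def by (rule INF_lower)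
  then show ?thesis by (simp add: zero_enat_def[symmetric])
qed

lemma live_dist_out:
  assumes "v \<notin> A"
  shows "live_dist x A v = (case x v of None \<Rightarrow> \<infinity> | Some y \<Rightarrow> eSuc (live_dist x A y))"
  unfolding live_dist_def live_paths_Suc[OF assms]
  by (cases "x v") (simp_all add: INF_enat_Suc top_enat_def)


definition isrec :: "('v \<Rightarrow> 'v option) \<Rightarrow> 'v set \<Rightarrow> ('v \<Rightarrow> enat) \<Rightarrow> bool" where
  "isrec x S g \<longleftrightarrow> (\<forall>v. (v \<in> S \<longrightarrow> g v = 0) \<and>
     (v \<notin> S \<longrightarrow> g v = (case x v of None \<Rightarrow> \<infinity> | Some y \<Rightarrow> eSuc (g y))))"

lemma isrec_fin:
  assumes "isrec x S g1" "isrec x S g2"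
  shows "g1 v = enat n \<Longrightarrow> g2 v = enat n"
proof (induction n arbitrary: v)
  case 0
  then have "v \<in> S" using assms(1) unfolding isrec_def
    by (metis enat_0 infinity_ne_i0 option.case_eq_if zero_ne_eSuc)
  then show ?case using assms(2) unfolding isrec_def by (simp add: zero_enat_def)
next
  case (Suc m)
  have "v \<notin> S" using Suc.prems assms(1) unfolding isrec_def by (auto simp: zero_enat_def)
  then have e: "g1 v = (case x v of None \<Rightarrow> \<infinity> | Some y \<Rightarrow> eSuc (g1 y))"
    "g2 v = (case x v of None \<Rightarrow> \<infinity> | Some y \<Rightarrow> eSuc (g2 y))"
    using assms unfolding isrec_def by auto
  show ?case
  proof (cases "x v")
    case None then show ?thesis using e Suc.prems by simp
  next
    case (Some y)
    then have "eSuc (g1 y) = enat (Suc m)" using e Suc.prems by simp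
    then have "g1 y = enat m" by (metis eSuc_enat eSuc_inject)
    then have "g2 y = enat m" by (rule Suc.IH)
    then show ?thesis using e Some by (simp add: eSuc_enat)
  qed
qed

lemma isrec_unique:
  assumes "isrec x S g1" "isrec x S g2"
  shows "g1 = g2"
proof
  fix v
  show "g1 v = g2 v"
  proof (cases "g1 v")
    case (enat n) then show ?thesis using isrec_fin[OF assms] by simp
  next
    case infinity
    show ?thesis
    proof (cases "g2 v")
      case (enat n) then show ?thesis using isrec_fin[OF assms(2,1)] by simp
    qed (use infinity in simp)
  qed
qed

definition Dset :: "'v set \<Rightarrow> ('v \<Rightarrow> enat) \<Rightarrow> 'v \<Rightarrow> 'v option set" where
  "Dset S f v = (if v \<in> S then (if f v = 0 then UNIV else {})
     else if f v = 0 then {}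
     else if f v = \<infinity> then insert None (Some ` {u. f u = \<infinity>})
     else Some ` {u. f u = enat (the_enat (f v) - 1)})"

lemma live_isrec: "isrec x S (\<lambda>v. live_dist x S v)"
  unfolding isrec_def using live_dist_in live_dist_out by auto

lemma live_char:
  "(\<lambda>v. live_dist x S v) = f \<longleftrightarrow> (\<forall>v. x v \<in> Dset S f v)"
proof
  assume A: "(\<lambda>v. live_dist x S v) = f"
  then have R: "isrec x S f" using live_isrec by metis
  show "\<forall>v. x v \<in> Dset S f v"
  proof
    fix v
    show "x v \<in> Dset S f v"
    proof (cases "v \<in> S")
      case True then show ?thesis using R by (simp add: isrec_def Dset_def)
    next
      case nS: False
      then have e: "f v = (case x v of None \<Rightarrow> \<infinity> | Some y \<Rightarrow> eSuc (f y))"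
        using R by (simp add: isrec_def)
      show ?thesis
      proof (cases "x v")
        case None then show ?thesis using e nS by (simp add: Dset_def)
      next
        case (Some y)
        show ?thesis
        proof (cases "f y")
          case (enat m)
          then show ?thesis using e nS Some by (simp add: Dset_def eSuc_enat zero_enat_def)
        next
          case infinity
          then show ?thesis using e nS Some by (simp add: Dset_def)
        qed
      qed
    qed
  qed
next
  assume H: "\<forall>v. x v \<in> Dset S f v"
  have "isrec x S f" unfolding isrec_def
  proof (intro allI conjI impI)
    fix v assume "v \<in> S" then show "f v = 0" using H[rule_format, of v] by (auto simp: Dset_def split: if_splits)
  next
    fix v assume nS: "v \<notin> S"
    have Hv: "x v \<in> Dset S f v" using H by blast
    show "f v = (case x v of None \<Rightarrow> \<infinity> | Some y \<Rightarrow> eSuc (f y))"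
    proof (cases "x v")
      case None then show ?thesis using Hv nS by (auto simp: Dset_def split: if_splits)
    next
      case (Some y)
      show ?thesis
      proof (cases "f v")
        case infinity then show ?thesis using Hv nS Some by (auto simp: Dset_def split: if_splits)
      next
        case (enat n)
        then have "n \<noteq> 0" using Hv nS by (auto simp: Dset_def zero_enat_def split: if_splits)
        moreover have "f y = enat (n - 1)" using Hv nS Some enat by (auto simp: Dset_def split: if_splits)
        ultimately show ?thesis using Some enat by (simp add: eSuc_enat)
      qed
    qed
  qed
  then show "(\<lambda>v. live_dist x S v) = f" using isrec_unique live_isrec by metis
qed


lemma sum_option_UNIV:
  fixes g :: "'v::finite option \<Rightarrow> real"
  shows "(\<Sum>c\<in>UNIV. g c) = g None + (\<Sum>u\<in>UNIV. g (Some u))"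
proof -
  have "(UNIV :: 'v option set) = insert None (Some ` UNIV)" by (rule UNIV_option_conv)
  then have "(\<Sum>c\<in>UNIV. g c) = (\<Sum>c\<in>insert None (Some ` UNIV). g c)" by simp
  also have "\<dots> = g None + (\<Sum>c\<in>Some ` UNIV. g c)" by (subst sum.insert) auto
  also have "(\<Sum>c\<in>Some ` UNIV. g c) = (\<Sum>u\<in>UNIV. g (Some u))" by (subst sum.reindex) auto
  finally show ?thesis .
qed

lemma pmf_sel:
  fixes w :: "'v::finite \<Rightarrow> 'v \<Rightarrow> real"
  assumes nn: "\<And>u v. w u v \<ge> 0" and s1: "\<And>v. (\<Sum>u\<in>UNIV. w u v) \<le> 1"
  shows "pmf (sel_pmf w v) c = (case c of None \<Rightarrow> 1 - (\<Sum>u\<in>UNIV. w u v) | Some u \<Rightarrow> w u v)"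
  unfolding sel_pmf_def
proof (rule pmf_embed_pmf)
  fix c :: "'v option"
  show "0 \<le> (case c of None \<Rightarrow> 1 - (\<Sum>u\<in>UNIV. w u v) | Some u \<Rightarrow> w u v)"
    using nn s1[of v] by (cases c) auto
next
  let ?g = "\<lambda>c::'v option. (case c of None \<Rightarrow> 1 - (\<Sum>u\<in>UNIV. w u v) | Some u \<Rightarrow> w u v)"
  have "(\<integral>\<^sup>+x. ennreal (?g x) \<partial>count_space UNIV) = (\<Sum>x\<in>UNIV. ennreal (?g x))"
    by (rule nn_integral_count_space_finite) simp
  also have "\<dots> = ennreal (\<Sum>x\<in>UNIV. ?g x)"
    by (rule sum_ennreal) (use nn s1[of v] in \<open>auto split: option.splits\<close>)
  also have "(\<Sum>x\<in>UNIV. ?g x) = 1" by (subst sum_option_UNIV) simp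
  finally show "(\<integral>\<^sup>+x. ennreal (?g x) \<partial>count_space UNIV) = 1" by simp
qed

lemma prob_sel_Some:
  fixes w :: "'v::finite \<Rightarrow> 'v \<Rightarrow> real"
  assumes nn: "\<And>u v. w u v \<ge> 0" and s1: "\<And>v. (\<Sum>u\<in>UNIV. w u v) \<le> 1"
  shows "measure_pmf.prob (sel_pmf w v) (Some ` K) = (\<Sum>u\<in>K. w u v)"
  by (subst measure_measure_pmf_finite) (auto simp: sum.reindex pmf_sel[OF nn s1])

lemma prob_sel_None:
  fixes w :: "'v::finite \<Rightarrow> 'v \<Rightarrow> real"
  assumes nn: "\<And>u v. w u v \<ge> 0" and s1: "\<And>v. (\<Sum>u\<in>UNIV. w u v) \<le> 1"
  shows "measure_pmf.prob (sel_pmf w v) (insert None (Some ` K)) = 1 - (\<Sum>u\<in>UNIV. w u v) + (\<Sum>u\<in>K. w u v)"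
  by (subst measure_measure_pmf_finite) (auto simp: sum.reindex pmf_sel[OF nn s1])

abbreviation U :: "real measure" where "U \<equiv> uniform_measure lborel {0..1::real}"

lemma emeasure_U:
  assumes "A \<in> sets borel"
  shows "emeasure U A = emeasure lborel ({0..1} \<inter> A)"
  using assms by (subst emeasure_uniform_measure) (auto simp: divide_ennreal_def)


lemma sum_nn_le1:
  fixes w :: "'v::finite \<Rightarrow> 'v \<Rightarrow> real"
  assumes nn: "\<And>u v. w u v \<ge> 0" and s1: "\<And>v. (\<Sum>u\<in>UNIV. w u v) \<le> 1"
  shows "0 \<le> (\<Sum>u\<in>K. w u v)" "(\<Sum>u\<in>K. w u v) \<le> 1"
proof -
  show "0 \<le> (\<Sum>u\<in>K. w u v)" using nn by (simp add: sum_nonneg)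
  have "(\<Sum>u\<in>K. w u v) \<le> (\<Sum>u\<in>UNIV. w u v)" by (rule sum_mono2) (use nn in auto)
  then show "(\<Sum>u\<in>K. w u v) \<le> 1" using s1[of v] by simp
qed

lemma Cset_borel: "Cset w S f v \<in> sets borel"
  unfolding Cset_def by auto

lemma per_node:
  fixes w :: "'v::finite \<Rightarrow> 'v \<Rightarrow> real"
  assumes nn: "\<And>u v. w u v \<ge> 0" and s1: "\<And>v. (\<Sum>u\<in>UNIV. w u v) \<le> 1"
  shows "emeasure U (Cset w S f v) = ennreal (measure_pmf.prob (sel_pmf w v) (Dset S f v))"
proof -
  have bnd: "\<And>K. 0 \<le> (\<Sum>u\<in>K. w u v) \<and> (\<Sum>u\<in>K. w u v) \<le> 1"
    using sum_nn_le1[where w=w and v=v] nn s1 by blast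
  have E: "emeasure U (Cset w S f v) = emeasure lborel ({0..1} \<inter> Cset w S f v)"
    by (rule emeasure_U[OF Cset_borel])
  show ?thesis
  proof (cases "v \<in> S")
    case True
    then show ?thesis unfolding E by (auto simp: Cset_def Dset_def)
  next
    case nS: False
    show ?thesis
    proof (cases "f v")
      case infinity
      let ?a = "\<Sum>u\<in>{u. f u < \<infinity>}. w u v"
      have i: "{0..1} \<inter> {?a<..} = {?a<..1}" using bnd[of "{u. f u < \<infinity>}"] by auto
      have split: "(\<Sum>u\<in>UNIV. w u v) = ?a + (\<Sum>u\<in>{u. f u = \<infinity>}. w u v)"
      proof -
        have "(UNIV::'v set) = {u. f u < \<infinity>} \<union> {u. f u = \<infinity>}" by auto
        then have "(\<Sum>u\<in>UNIV. w u v) = (\<Sum>u\<in>{u. f u < \<infinity>} \<union> {u. f u = \<infinity>}. w u v)" by simp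
        also have "\<dots> = ?a + (\<Sum>u\<in>{u. f u = \<infinity>}. w u v)" by (rule sum.union_disjoint) auto
        finally show ?thesis .
      qed
      show ?thesis unfolding E using nS infinity i bnd[of "{u. f u < \<infinity>}"]
        by (simp add: Cset_def Dset_def prob_sel_None[OF nn s1] split)
    next
      case (enat n)
      show ?thesis
      proof (cases "n = 0")
        case True then show ?thesis unfolding E using nS enat by (simp add: Cset_def Dset_def zero_enat_def)
      next
        case n0: False
        show ?thesis
        proof (cases "n = 1")
          case True
          have eq: "{u. f u \<le> enat 0} = {u. f u = enat 0}" by (auto simp: zero_enat_def[symmetric])
          let ?b = "ssum w f v 0"
          have i: "{0..1} \<inter> {..?b} = {0..?b}" using bnd[of "{u. f u \<le> enat 0}"] by (auto simp: ssum_def)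
          show ?thesis unfolding E using nS enat True i bnd[of "{u. f u \<le> enat 0}"]
            by (simp add: Cset_def Dset_def prob_sel_Some[OF nn s1] ssum_def eq one_enat_def zero_enat_def)
        next
          case False
          then have n2: "n \<ge> 2" using n0 by simp
          let ?a = "ssum w f v (n-2)" and ?b = "ssum w f v (n-1)"
          have ab: "?a \<le> ?b" by (rule ssum_mono[OF nn]) simp
          have i: "{0..1} \<inter> {?a<..?b} = {?a<..?b}"
            using bnd[of "{u. f u \<le> enat (n-2)}"] bnd[of "{u. f u \<le> enat (n-1)}"] by (auto simp: ssum_def)
          have split: "?b = ?a + (\<Sum>u\<in>{u. f u = enat (n-1)}. w u v)"
          proof -
            have "{u. f u \<le> enat (n-1)} = {u. f u \<le> enat (n-2)} \<union> {u. f u = enat (n-1)}"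
            proof (intro set_eqI iffI)
              fix u assume "u \<in> {u. f u \<le> enat (n-1)}"
              then obtain k where "f u = enat k" "k \<le> n - 1" by (cases "f u") auto
              then show "u \<in> {u. f u \<le> enat (n-2)} \<union> {u. f u = enat (n-1)}" using n2 by auto
            next
              fix u assume "u \<in> {u. f u \<le> enat (n-2)} \<union> {u. f u = enat (n-1)}"
              then show "u \<in> {u. f u \<le> enat (n-1)}" using n2 by (auto elim: order_trans)
            qed
            then have "?b = (\<Sum>u\<in>{u. f u \<le> enat (n-2)} \<union> {u. f u = enat (n-1)}. w u v)"
              by (simp add: ssum_def)
            also have "\<dots> = ?a + (\<Sum>u\<in>{u. f u = enat (n-1)}. w u v)"
              unfolding ssum_def by (rule sum.union_disjoint) (use n2 in auto)
            finally show ?thesis .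
          qed
          have d: "?b - ?a = (\<Sum>u\<in>{u. f u = enat (n-1)}. w u v)" using split by simp
          show ?thesis unfolding E using nS enat False n0 i ab d
            by (simp add: Cset_def Dset_def prob_sel_Some[OF nn s1] one_enat_def zero_enat_def)
        qed
      qed
    qed
  qed
qed


lemma space_T: "space (threshold_space :: ('v::finite \<Rightarrow> real) measure) = UNIV"
  unfolding threshold_space_def by (simp add: space_PiM)

lemma sets_T_Pi: "Pi UNIV (Cset w S f) \<in> sets (threshold_space :: ('v::finite \<Rightarrow> real) measure)"
proof -
  have "Pi\<^sub>E UNIV (Cset w S f) \<in> sets (PiM UNIV (\<lambda>_::'v. U))"
    by (rule sets_PiM_I_finite) (auto simp: Cset_borel)
  then show ?thesis unfolding threshold_space_def PiE_UNIV_domain .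
qed

lemma prob_U: "prob_space U"
  by (rule prob_space_uniform_measure) auto

lemma prob_T: "prob_space (threshold_space :: ('v::finite \<Rightarrow> real) measure)"
  unfolding threshold_space_def by (rule prob_space_PiM) (rule prob_U)

lemma emeasure_T_Pi:
  "emeasure (threshold_space :: ('v::finite \<Rightarrow> real) measure) (Pi UNIV (Cset w S f))
     = (\<Prod>v\<in>UNIV. emeasure U (Cset w S f v))"
proof -
  interpret product_sigma_finite "\<lambda>_::'v. U"
    unfolding product_sigma_finite_def using prob_U prob_space_imp_sigma_finite by blast
  have "emeasure (PiM UNIV (\<lambda>_::'v. U)) (Pi\<^sub>E UNIV (Cset w S f)) = (\<Prod>v\<in>UNIV. emeasure U (Cset w S f v))"
    by (rule emeasure_PiM) (auto simp: Cset_borel)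
  then show ?thesis unfolding threshold_space_def PiE_UNIV_domain .
qed

lemma prob_live_Pi:
  "measure_pmf.prob (live_pmf w) {x. \<forall>v. x v \<in> Dset S f v} = (\<Prod>v\<in>UNIV. measure_pmf.prob (sel_pmf w v) (Dset S f v))"
proof -
  have "{x. \<forall>v. x v \<in> Dset S f v} = PiE_dflt UNIV None (Dset S f)" by (auto simp: PiE_dflt_def)
  then show ?thesis unfolding live_pmf_def by (simp add: measure_Pi_pmf_PiE_dflt)
qed


lemma profile_meas:
  fixes wp wn :: "'v::finite \<Rightarrow> 'v \<Rightarrow> real"
  assumes nnp: "\<And>u v. wp u v \<ge> 0" and nnn: "\<And>u v. wn u v \<ge> 0"
  shows "(\<lambda>(\<theta>p, \<theta>n). ((\<lambda>v. act_time wp \<theta>p P0 v), (\<lambda>v. act_time wn \<theta>n N0 v)))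
     \<in> measurable (threshold_space \<Otimes>\<^sub>M threshold_space) (count_space UNIV)"
    (is "?H \<in> measurable ?M _")
proof -
  have spM: "space ?M = UNIV" by (simp add: space_pair_measure space_T)
  have pre: "?H -` {(fp, fn)} \<inter> space ?M = Pi UNIV (Cset wp P0 fp) \<times> Pi UNIV (Cset wn N0 fn)" for fp fn
    unfolding spM using lt_char[where w=wp and S=P0 and f=fp, OF nnp] lt_char[where w=wn and S=N0 and f=fn, OF nnn]
    by (auto simp: Pi_def)
  show ?thesis
    by (subst measurable_count_space_eq_countable)
       (auto simp: pre sets_T_Pi)
qed

lemma profile_eq:
  fixes wp wn :: "'v::finite \<Rightarrow> 'v \<Rightarrow> real"
  assumes nnp: "\<And>u v. wp u v \<ge> 0" and nnn: "\<And>u v. wn u v \<ge> 0"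
    and s1p: "\<And>v. (\<Sum>u\<in>UNIV. wp u v) \<le> 1" and s1n: "\<And>v. (\<Sum>u\<in>UNIV. wn u v) \<le> 1"
  shows "distr (threshold_space \<Otimes>\<^sub>M threshold_space) (count_space UNIV)
            (\<lambda>(\<theta>p, \<theta>n). ((\<lambda>v. act_time wp \<theta>p P0 v), (\<lambda>v. act_time wn \<theta>n N0 v)))
         = measure_pmf (map_pmf (\<lambda>(xp, xn). ((\<lambda>v. live_dist xp P0 v), (\<lambda>v. live_dist xn N0 v)))
                          (pair_pmf (live_pmf wp) (live_pmf wn)))"
    (is "distr ?M _ ?H = measure_pmf (map_pmf ?K ?p)")
proof -
  interpret T: prob_space "threshold_space :: ('v \<Rightarrow> real) measure" by (rule prob_T)
  have spM: "space ?M = UNIV" by (simp add: space_pair_measure space_T)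
  have pre: "?H -` {(fp, fn)} \<inter> space ?M = Pi UNIV (Cset wp P0 fp) \<times> Pi UNIV (Cset wn N0 fn)" for fp fn
    unfolding spM using lt_char[where w=wp and S=P0 and f=fp, OF nnp] lt_char[where w=wn and S=N0 and f=fn, OF nnn]
    by (auto simp: Pi_def)
  have meas: "?H \<in> measurable ?M (count_space UNIV)"
    by (rule profile_meas[OF nnp nnn])
  show ?thesis
  proof (rule measure_eqI_countable[where A=UNIV])
    fix a :: "('v \<Rightarrow> enat) \<times> ('v \<Rightarrow> enat)"
    obtain fp fn where a: "a = (fp, fn)" by (cases a)
    have "emeasure (distr ?M (count_space UNIV) ?H) {a} = emeasure ?M (?H -` {a} \<inter> space ?M)"
      by (rule emeasure_distr[OF meas]) simp
    also have "\<dots> = emeasure threshold_space (Pi UNIV (Cset wp P0 fp)) * emeasure threshold_space (Pi UNIV (Cset wn N0 fn))"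
      unfolding a pre by (rule T.emeasure_pair_measure_Times) (auto simp: sets_T_Pi)
    also have "\<dots> = (\<Prod>v\<in>UNIV. emeasure U (Cset wp P0 fp v)) * (\<Prod>v\<in>UNIV. emeasure U (Cset wn N0 fn v))"
      by (simp add: emeasure_T_Pi)
    also have "\<dots> = (\<Prod>v\<in>UNIV. ennreal (measure_pmf.prob (sel_pmf wp v) (Dset P0 fp v))) *
                   (\<Prod>v\<in>UNIV. ennreal (measure_pmf.prob (sel_pmf wn v) (Dset N0 fn v)))"
      by (simp add: per_node[OF nnp s1p] per_node[OF nnn s1n])
    also have "\<dots> = ennreal (measure_pmf.prob (live_pmf wp) {x. \<forall>v. x v \<in> Dset P0 fp v} *
                            measure_pmf.prob (live_pmf wn) {x. \<forall>v. x v \<in> Dset N0 fn v})"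
      by (simp add: prob_live_Pi prod_ennreal ennreal_mult prod_nonneg)
    also have "\<dots> = ennreal (measure_pmf.prob ?p ({x. \<forall>v. x v \<in> Dset P0 fp v} \<times> {x. \<forall>v. x v \<in> Dset N0 fn v}))"
      by (subst measure_pmf_prob_product) auto
    also have "({x. \<forall>v. x v \<in> Dset P0 fp v} \<times> {x. \<forall>v. x v \<in> Dset N0 fn v}) = ?K -` {a}"
      unfolding a using live_char[where S=P0 and f=fp] live_char[where S=N0 and f=fn] by auto
    also have "ennreal (measure_pmf.prob ?p (?K -` {a})) = emeasure (measure_pmf (map_pmf ?K ?p)) {a}"
      by (simp add: emeasure_pmf_single pmf_map)
    finally show "emeasure (distr ?M (count_space UNIV) ?H) {a} = emeasure (measure_pmf (map_pmf ?K ?p)) {a}" .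
  qed auto
qed


theorem lemma1:
  fixes E :: "('v::finite \<times> 'v) set"
    and wp wn :: "'v \<Rightarrow> 'v \<Rightarrow> real"
    and P0 N0 :: "'v set"
  assumes "\<And>u v. wp u v \<ge> 0" and "\<And>u v. wn u v \<ge> 0"
    and "\<And>u v. (u, v) \<notin> E \<Longrightarrow> wp u v = 0"
    and "\<And>u v. (u, v) \<notin> E \<Longrightarrow> wn u v = 0"
    and "\<And>v. (\<Sum>u\<in>UNIV. wp u v) \<le> 1"
    and "\<And>v. (\<Sum>u\<in>UNIV. wn u v) \<le> 1"
    and "P0 \<inter> N0 = {}"
  shows "distr (threshold_space \<Otimes>\<^sub>M threshold_space) (count_space UNIV)
            (\<lambda>(\<theta>p, \<theta>n). clt_outcome wp wn P0 N0 \<theta>p \<theta>n)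
         = measure_pmf (map_pmf (\<lambda>(xp, xn). live_outcome P0 N0 xp xn)
                          (pair_pmf (live_pmf wp) (live_pmf wn)))"
proof -
  define g :: "('v \<Rightarrow> enat) \<times> ('v \<Rightarrow> enat) \<Rightarrow> 'v set \<times> 'v set" where
    "g = (\<lambda>(fp, fn). ({v. fp v < \<infinity> \<and> fp v < fn v}, {v. fn v < \<infinity> \<and> fn v \<le> fp v}))"
  let ?M = "threshold_space \<Otimes>\<^sub>M threshold_space :: (('v \<Rightarrow> real) \<times> ('v \<Rightarrow> real)) measure"
  let ?H = "\<lambda>(\<theta>p, \<theta>n). ((\<lambda>v. act_time wp \<theta>p P0 v), (\<lambda>v. act_time wn \<theta>n N0 v))"
  let ?K = "\<lambda>(xp, xn). ((\<lambda>v. live_dist xp P0 v), (\<lambda>v. live_dist xn N0 v))"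
  let ?p = "pair_pmf (live_pmf wp) (live_pmf wn)"
  have P: "distr ?M (count_space UNIV) ?H = measure_pmf (map_pmf ?K ?p)"
    by (rule profile_eq) (use assms in auto)
  have measH: "?H \<in> measurable ?M (count_space UNIV)"
    by (rule profile_meas) (use assms in auto)
  have measg: "g \<in> measurable (count_space UNIV) (count_space UNIV)" by simp
  have L: "(\<lambda>(\<theta>p, \<theta>n). clt_outcome wp wn P0 N0 \<theta>p \<theta>n) = g \<circ> ?H"
    by (auto simp: g_def clt_outcome_def fun_eq_iff)
  have R: "(\<lambda>(xp, xn). live_outcome P0 N0 xp xn) = g \<circ> ?K"
    by (auto simp: g_def live_outcome_def fun_eq_iff)
  have "distr ?M (count_space UNIV) (\<lambda>(\<theta>p, \<theta>n). clt_outcome wp wn P0 N0 \<theta>p \<theta>n)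
        = distr (distr ?M (count_space UNIV) ?H) (count_space UNIV) g"
    unfolding L by (rule distr_distr[OF measg measH, symmetric])
  also have "\<dots> = distr (measure_pmf (map_pmf ?K ?p)) (count_space UNIV) g" by (simp only: P)
  also have "\<dots> = measure_pmf (map_pmf g (map_pmf ?K ?p))" by (simp add: map_pmf_rep_eq)
  also have "map_pmf g (map_pmf ?K ?p) = map_pmf (\<lambda>(xp, xn). live_outcome P0 N0 xp xn) ?p"
    unfolding R map_pmf_comp by (simp add: comp_def)
  finally show ?thesis .
qed

end
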